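(* For all integers $0\le r\le n$, \[ \log s(n,r) \le \frac{1}{n-r+1}\binom{n}{r}\log(n-r+2). \]
   Context: $s(n,r)$ denotes the number of sparse paving matroids of rank $r$ on the ground set $[n]=\{1,\dots,n\}$. A matroid of rank $r$ is sparse paving if every $r$-subset of the ground set is either a basis or a circuit-hyperplane (equivalently, the matroid and its dual are both paving, where paving means every circuit has at least $r$ elements). $\log$ is the logarithm to base $2$. *)

theory Defs
  imports Complex_Main
begin

definition matroid_bases :: "'a set \<Rightarrow> 'a set set \<Rightarrow> bool" where
  "matroid_bases E \<B> \<longleftrightarrow> finite E \<and> \<B> \<subseteq> Pow E \<and> \<B> \<noteq> {} \<and>
     (\<forall>B1\<in>\<B>. \<forall>B2\<in>\<B>. \<forall>x\<in>B1 - B2. \<exists>y\<in>B2 - B1. insert y (B1 - {x}) \<in> \<B>)"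

definition indep :: "'a set set \<Rightarrow> 'a set \<Rightarrow> bool" where
  "indep \<B> X \<longleftrightarrow> (\<exists>B\<in>\<B>. X \<subseteq> B)"

definition circuit :: "'a set \<Rightarrow> 'a set set \<Rightarrow> 'a set \<Rightarrow> bool" where
  "circuit E \<B> C \<longleftrightarrow> C \<subseteq> E \<and> \<not> indep \<B> C \<and> (\<forall>D. D \<subset> C \<longrightarrow> indep \<B> D)"

definition mrank :: "'a set set \<Rightarrow> 'a set \<Rightarrow> nat" where
  "mrank \<B> X = Max {card I | I. I \<subseteq> X \<and> indep \<B> I}"

definition flat :: "'a set \<Rightarrow> 'a set set \<Rightarrow> 'a set \<Rightarrow> bool" where
  "flat E \<B> F \<longleftrightarrow> F \<subseteq> E \<and> (\<forall>e\<in>E - F. mrank \<B> (insert e F) > mrank \<B> F)"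

definition hyperplane :: "'a set \<Rightarrow> 'a set set \<Rightarrow> 'a set \<Rightarrow> bool" where
  "hyperplane E \<B> H \<longleftrightarrow> flat E \<B> H \<and> mrank \<B> H + 1 = mrank \<B> E"

definition sparse_paving :: "'a set \<Rightarrow> nat \<Rightarrow> 'a set set \<Rightarrow> bool" where
  "sparse_paving E r \<B> \<longleftrightarrow>
     (\<forall>X. X \<subseteq> E \<and> card X = r \<longrightarrow> X \<in> \<B> \<or> (circuit E \<B> X \<and> hyperplane E \<B> X))"

definition s :: "nat \<Rightarrow> nat \<Rightarrow> nat" where
  "s n r = card {\<B>. matroid_bases {1..n} \<B> \<and> (\<forall>B\<in>\<B>. card B = r) \<and> sparse_paving {1..n} r \<B>}"

end

theory Submission
  imports Defs "HOL-Analysis.Convex"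
begin


lemma holder_prod:
  fixes x y :: "'b \<Rightarrow> real"
  assumes fin: "finite I" and cI: "card I = k" and k: "k \<ge> 1"
    and nn: "\<forall>j\<in>I. x j \<ge> 0 \<and> y j \<ge> 0" and a0: "\<alpha> \<ge> 0" and b0: "\<beta> \<ge> 0"
    and ha: "\<alpha> ^ k \<le> (\<Prod>j\<in>I. x j)" and hb: "\<beta> ^ k \<le> (\<Prod>j\<in>I. y j)"
  shows "(\<alpha> + \<beta>) ^ k \<le> (\<Prod>j\<in>I. x j + y j)"
proof (cases "\<exists>j\<in>I. x j + y j = 0")
  case True
  then obtain j where j: "j \<in> I" "x j + y j = 0" by blast
  hence "x j = 0" "y j = 0" using nn by auto
  hence "(\<Prod>j\<in>I. x j) = 0" "(\<Prod>j\<in>I. y j) = 0" using j fin by (auto intro: prod_zero)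
  hence "\<alpha> ^ k \<le> 0" "\<beta> ^ k \<le> 0" using ha hb by auto
  hence "\<alpha> ^ k = 0" "\<beta> ^ k = 0" using a0 b0 by (meson antisym zero_le_power)+
  hence "\<alpha> = 0" "\<beta> = 0" using k by simp_all
  thus ?thesis using k nn by (simp add: prod_nonneg power_0_left)
next
  case False
  define s where "s j = x j + y j" for j
  have sp: "\<forall>j\<in>I. s j > 0" using False nn s_def by (metis add_nonneg_nonneg less_eq_real_def)
  have Ine: "I \<noteq> {}" using cI k by auto
  define A where "A = (\<Prod>j\<in>I. x j / s j)"
  define B where "B = (\<Prod>j\<in>I. y j / s j)"
  define S where "S = (\<Prod>j\<in>I. s j)"
  have S0: "S > 0" using sp S_def by (simp add: prod_pos)
  have A0: "A \<ge> 0" unfolding A_def using nn sp by (intro prod_nonneg) auto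
  have B0: "B \<ge> 0" unfolding B_def using nn sp by (intro prod_nonneg) auto
  have amA: "A powr (1 / card I) \<le> (\<Sum>j\<in>I. (x j / s j) / card I)"
    unfolding A_def by (rule arith_geom_mean[OF fin Ine]) (use nn sp in \<open>auto intro: divide_nonneg_pos\<close>)
  have amB: "B powr (1 / card I) \<le> (\<Sum>j\<in>I. (y j / s j) / card I)"
    unfolding B_def by (rule arith_geom_mean[OF fin Ine]) (use nn sp in \<open>auto intro: divide_nonneg_pos\<close>)
  have "(\<Sum>j\<in>I. (x j / s j) / card I) + (\<Sum>j\<in>I. (y j / s j) / card I)
      = (\<Sum>j\<in>I. 1 / card I)"
    unfolding sum.distrib[symmetric]
    by (rule sum.cong) (use sp in \<open>auto simp: s_def add_divide_distrib[symmetric]\<close>)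
  also have "\<dots> = 1" using Ine fin by simp
  finally have AB1: "A powr (1 / k) + B powr (1 / k) \<le> 1" using amA amB cI by simp
  have xAS: "(\<Prod>j\<in>I. x j) = A * S" unfolding A_def S_def prod.distrib[symmetric]
    by (rule prod.cong) (use sp in auto)
  have yBS: "(\<Prod>j\<in>I. y j) = B * S" unfolding B_def S_def prod.distrib[symmetric]
    by (rule prod.cong) (use sp in auto)
  have rootk: "(z powr (1 / k)) ^ k = z" if "z \<ge> 0" for z :: real
  proof (cases "z = 0")
    case True thus ?thesis using k by simp
  next
    case False
    hence "(z powr (1 / k)) ^ k = z powr (1 / k * k)"
      using that by (simp add: powr_realpow[symmetric] powr_powr)
    thus ?thesis using k False that by simp
  qed
  have le_root: "a \<le> z powr (1 / k)" if "a \<ge> 0" "z \<ge> 0" "a ^ k \<le> z" for a z :: real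
  proof (rule ccontr)
    assume "\<not> ?thesis"
    hence "(z powr (1 / k)) ^ k < a ^ k"
      using k by (intro power_strict_mono) auto
    thus False using rootk[OF that(2)] that(3) by simp
  qed
  have "\<alpha> \<le> (A * S) powr (1 / k)" using le_root a0 ha xAS A0 S0 by simp
  hence al: "\<alpha> \<le> A powr (1 / k) * S powr (1 / k)" using A0 S0 by (simp add: powr_mult)
  have "\<beta> \<le> (B * S) powr (1 / k)" using le_root b0 hb yBS B0 S0 by simp
  hence be: "\<beta> \<le> B powr (1 / k) * S powr (1 / k)" using B0 S0 by (simp add: powr_mult)
  have "\<alpha> + \<beta> \<le> (A powr (1 / k) + B powr (1 / k)) * S powr (1 / k)"
    using al be by (simp add: distrib_right)
  also have "\<dots> \<le> S powr (1 / k)" using AB1 by (simp add: mult_left_le_one_le)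
  finally have "(\<alpha> + \<beta>) ^ k \<le> (S powr (1 / k)) ^ k"
    using a0 b0 by (intro power_mono) auto
  also have "\<dots> = S" using rootk S0 by simp
  finally show ?thesis unfolding S_def s_def .
qed

lemma holder_prodP:
  fixes x y :: "'b \<Rightarrow> real"
  assumes fin: "finite I" and cI: "card I = k" and k: "k \<ge> 1"
    and nn: "\<forall>j\<in>I. x j \<ge> 0 \<and> y j \<ge> 0" and a0: "\<alpha> \<ge> 0" and b0: "\<beta> \<ge> 0" and P0: "P \<ge> 0"
    and ha: "\<alpha> ^ k \<le> P * (\<Prod>j\<in>I. x j)" and hb: "\<beta> ^ k \<le> P * (\<Prod>j\<in>I. y j)"
  shows "(\<alpha> + \<beta>) ^ k \<le> P * (\<Prod>j\<in>I. x j + y j)"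
proof -
  define c where "c = root k P"
  have c0: "c \<ge> 0" using P0 c_def by (simp add: real_root_ge_zero)
  have ck: "c ^ k = P" using P0 k c_def by (simp add: real_root_pow_pos2)
  have e: "P * (\<Prod>j\<in>I. f j) = (\<Prod>j\<in>I. c * f j)" for f :: "'b \<Rightarrow> real"
    by (simp add: prod.distrib cI ck)
  have "(\<alpha> + \<beta>) ^ k \<le> (\<Prod>j\<in>I. c * x j + c * y j)"
    by (rule holder_prod[OF fin cI k _ a0 b0]) (use nn c0 ha hb e in auto)
  also have "\<dots> = P * (\<Prod>j\<in>I. x j + y j)" by (simp add: e distrib_left)
  finally show ?thesis .
qed

lemma shearer:
  fixes V :: "'a set" and J :: "'b set" and G :: "'b \<Rightarrow> 'a set"
  assumes "finite V" "finite J" "k \<ge> 1" "\<forall>v\<in>V. card {j\<in>J. v \<in> G j} = k" "F \<subseteq> Pow V"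
  shows "real (card F) ^ k \<le> (\<Prod>j\<in>J. real (card ((\<lambda>S. S \<inter> G j) ` F)))"
  using assms
proof (induction V arbitrary: F rule: finite_induct)
  case empty
  hence "F = {} \<or> F = {{}}" by auto
  thus ?case
  proof
    assume "F = {}" thus ?thesis using empty by (simp add: power_0_left)
  next
    assume "F = {{}}" thus ?thesis by simp
  qed
next
  case (insert v V F)
  have finF: "finite F" using insert.prems insert.hyps(1) by (meson finite_Pow_iff finite_insert rev_finite_subset)
  define F0 where "F0 = {S\<in>F. v \<notin> S}"
  define F1' where "F1' = {S\<in>F. v \<in> S}"
  define F1 where "F1 = (\<lambda>S. S - {v}) ` F1'"
  have inj1: "inj_on (\<lambda>S. S - {v}) F1'" unfolding F1'_def inj_on_def by blast
  have cF: "card F = card F0 + card F1"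
  proof -
    have "F = F0 \<union> F1'" "F0 \<inter> F1' = {}" unfolding F0_def F1'_def by auto
    hence "card F = card F0 + card F1'" using finF by (metis card_Un_disjoint finite_Un)
    thus ?thesis unfolding F1_def using card_image[OF inj1] by simp
  qed
  have P0: "F0 \<subseteq> Pow V" "F1 \<subseteq> Pow V" using insert.prems(4) unfolding F0_def F1_def F1'_def by auto
  have cov: "\<forall>w\<in>V. card {j\<in>J. w \<in> G j} = k" using insert.prems(3) by auto
  have IH0: "real (card F0) ^ k \<le> (\<Prod>j\<in>J. real (card ((\<lambda>S. S \<inter> G j) ` F0)))"
    using insert.IH[OF insert.prems(1,2) cov P0(1)] .
  have IH1: "real (card F1) ^ k \<le> (\<Prod>j\<in>J. real (card ((\<lambda>S. S \<inter> G j) ` F1)))"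
    using insert.IH[OF insert.prems(1,2) cov P0(2)] .
  define a where "a j = real (card ((\<lambda>S. S \<inter> G j) ` F0))" for j
  define b where "b j = real (card ((\<lambda>S. S \<inter> G j) ` F1))" for j
  define c where "c j = real (card ((\<lambda>S. S \<inter> G j) ` F))" for j
  define I where "I = {j\<in>J. v \<in> G j}"
  have cI: "card I = k" using insert.prems(3) I_def by auto
  have finI: "finite I" using insert.prems(1) I_def by auto
  have IJ: "I \<subseteq> J" using I_def by auto
  have out: "a j \<le> c j \<and> b j \<le> c j" if "j \<in> J - I" for j
  proof -
    have vG: "v \<notin> G j" using that I_def by auto
    have "(\<lambda>S. S \<inter> G j) ` F0 \<subseteq> (\<lambda>S. S \<inter> G j) ` F" unfolding F0_def by auto
    moreover have "(\<lambda>S. S \<inter> G j) ` F1 \<subseteq> (\<lambda>S. S \<inter> G j) ` F"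
    proof
      fix T assume "T \<in> (\<lambda>S. S \<inter> G j) ` F1"
      then obtain S where "S \<in> F" "T = (S - {v}) \<inter> G j" unfolding F1_def F1'_def by auto
      moreover have "(S - {v}) \<inter> G j = S \<inter> G j" using vG by auto
      ultimately show "T \<in> (\<lambda>S. S \<inter> G j) ` F" by auto
    qed
    ultimately show ?thesis unfolding a_def b_def c_def using finF
      by (simp add: card_mono)
  qed
  have inn: "a j + b j \<le> c j" if "j \<in> I" for j
  proof -
    have vG: "v \<in> G j" using that I_def by auto
    let ?t0 = "(\<lambda>S. S \<inter> G j) ` F0" and ?t1 = "(\<lambda>S. S \<inter> G j) ` F1"
    have s1: "?t0 \<union> insert v ` ?t1 \<subseteq> (\<lambda>S. S \<inter> G j) ` F"
    proof
      fix T assume "T \<in> ?t0 \<union> insert v ` ?t1"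
      thus "T \<in> (\<lambda>S. S \<inter> G j) ` F"
      proof
        assume "T \<in> ?t0" thus ?thesis unfolding F0_def by auto
      next
        assume "T \<in> insert v ` ?t1"
        then obtain S where "S \<in> F" "v \<in> S" "T = insert v ((S - {v}) \<inter> G j)" unfolding F1_def F1'_def by auto
        moreover have "insert v ((S - {v}) \<inter> G j) = S \<inter> G j" using vG \<open>v \<in> S\<close> by auto
        ultimately show ?thesis by auto
      qed
    qed
    have d: "?t0 \<inter> insert v ` ?t1 = {}" unfolding F0_def by auto
    have i: "inj_on (insert v) ?t1" unfolding F1_def inj_on_def by auto
    have f0: "finite ?t0" "finite ?t1" using finF unfolding F0_def F1_def F1'_def by auto
    have "card ?t0 + card ?t1 = card (?t0 \<union> insert v ` ?t1)"
      using card_Un_disjoint[OF f0(1) finite_imageI[OF f0(2)] d] card_image[OF i] by simp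
    also have "\<dots> \<le> card ((\<lambda>S. S \<inter> G j) ` F)" using s1 finF by (simp add: card_mono)
    finally show ?thesis unfolding a_def b_def c_def by linarith
  qed
  define P where "P = (\<Prod>j\<in>J - I. c j)"
  have P0': "P \<ge> 0" unfolding P_def c_def by (simp add: prod_nonneg)
  have splitJ: "(\<Prod>j\<in>J. f j) = (\<Prod>j\<in>J - I. f j) * (\<Prod>j\<in>I. f j)" for f :: "'b \<Rightarrow> real"
    using prod.subset_diff[OF IJ insert.prems(1)] by simp
  have h0: "real (card F0) ^ k \<le> P * (\<Prod>j\<in>I. a j)"
  proof -
    have "(\<Prod>j\<in>J - I. a j) \<le> P" unfolding P_def
      using out by (intro prod_mono) (auto simp: a_def)
    hence "(\<Prod>j\<in>J - I. a j) * (\<Prod>j\<in>I. a j) \<le> P * (\<Prod>j\<in>I. a j)"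
      by (intro mult_right_mono) (auto simp: a_def prod_nonneg)
    thus ?thesis using IH0 splitJ[of a] unfolding a_def by simp
  qed
  have h1: "real (card F1) ^ k \<le> P * (\<Prod>j\<in>I. b j)"
  proof -
    have "(\<Prod>j\<in>J - I. b j) \<le> P" unfolding P_def
      using out by (intro prod_mono) (auto simp: b_def)
    hence "(\<Prod>j\<in>J - I. b j) * (\<Prod>j\<in>I. b j) \<le> P * (\<Prod>j\<in>I. b j)"
      by (intro mult_right_mono) (auto simp: b_def prod_nonneg)
    thus ?thesis using IH1 splitJ[of b] unfolding b_def by simp
  qed
  have "real (card F) ^ k = (real (card F0) + real (card F1)) ^ k" using cF by simp
  also have "\<dots> \<le> P * (\<Prod>j\<in>I. a j + b j)"
    by (rule holder_prodP[OF finI cI insert.prems(2) _ _ _ P0' h0 h1]) (auto simp: a_def b_def)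
  also have "\<dots> \<le> P * (\<Prod>j\<in>I. c j)"
    using inn P0' by (intro mult_left_mono prod_mono) (auto simp: a_def b_def)
  also have "\<dots> = (\<Prod>j\<in>J. c j)" using splitJ[of c] P_def by simp
  finally show ?case unfolding c_def .
qed


lemma finite_cards: "finite X \<Longrightarrow> finite {card I | I. I \<subseteq> X \<and> indep \<B> I}"
proof -
  assume "finite X"
  have "{card I | I. I \<subseteq> X \<and> indep \<B> I} \<subseteq> card ` Pow X" by auto
  thus ?thesis using \<open>finite X\<close> by (meson finite_Pow_iff finite_imageI finite_subset)
qed

lemma indep_card:
  assumes "matroid_bases E \<B>" "\<forall>B\<in>\<B>. card B = r" "indep \<B> I" "card I \<ge> r"
  shows "I \<in> \<B>"
proof -
  obtain B where B: "B \<in> \<B>" "I \<subseteq> B" using assms(3) unfolding indep_def by auto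
  have "finite B" using assms(1) B(1) unfolding matroid_bases_def by (meson PowD finite_subset subsetD)
  moreover have "card B \<le> card I" using assms(2,4) B by auto
  ultimately have "I = B" using B(2) by (meson card_seteq)
  thus ?thesis using B by simp
qed

lemma stable:
  assumes mb: "matroid_bases E \<B>" and cr: "\<forall>B\<in>\<B>. card B = r" and sp: "sparse_paving E r \<B>"
    and X1: "X1 \<subseteq> E" "card X1 = r" "X1 \<notin> \<B>"
    and X2: "X2 \<subseteq> E" "card X2 = r" "X2 \<notin> \<B>"
    and Y: "Y \<subseteq> X1" "Y \<subseteq> X2" "card Y = r - 1" and r: "r \<ge> 1"
  shows "X1 = X2"
proof (rule ccontr)
  assume ne: "X1 \<noteq> X2"
  have finE: "finite E" using mb unfolding matroid_bases_def by auto
  have fin1: "finite X1" "finite X2" using X1 X2 finE by (auto intro: finite_subset)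
  have finY: "finite Y" using Y fin1 by (auto intro: finite_subset)
  have "card (X1 - Y) = 1" using Y fin1 r X1 by (simp add: card_Diff_subset finY)
  then obtain a where a: "X1 - Y = {a}" by (meson card_1_singletonE)
  have "card (X2 - Y) = 1" using Y fin1 r X2 by (simp add: card_Diff_subset finY)
  then obtain b where b: "X2 - Y = {b}" by (meson card_1_singletonE)
  have X1a: "X1 = insert a Y" using a Y by auto
  have X2b: "X2 = insert b Y" using b Y by auto
  have aY: "a \<notin> Y" "b \<notin> Y" using a b by auto
  have ab: "a \<noteq> b" using ne X1a X2b by auto
  have circ: "circuit E \<B> X1" and hyp: "hyperplane E \<B> X1"
    using sp X1 unfolding sparse_paving_def by auto
  have "Y \<subset> X1" using X1a aY by auto
  hence indY: "indep \<B> Y" using circ unfolding circuit_def by auto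
  then obtain B0 where B0: "B0 \<in> \<B>" "Y \<subseteq> B0" unfolding indep_def by auto
  have finB0: "finite B0" using mb B0(1) finE unfolding matroid_bases_def by (meson PowD finite_subset subsetD)
  have "card (B0 - Y) = 1" using B0 cr r Y finB0 by (simp add: card_Diff_subset finY)
  then obtain c where c: "B0 - Y = {c}" by (meson card_1_singletonE)
  have B0c: "B0 = insert c Y" using c B0 by auto
  have cY: "c \<notin> Y" using c by auto
  have ca: "c \<noteq> a" using B0c X1a B0(1) X1(3) by auto
  have cb: "c \<noteq> b" using B0c X2b B0(1) X2(3) by auto
  have flat: "flat E \<B> X1" using hyp unfolding hyperplane_def by auto
  have bE: "b \<in> E - X1" using X2b X2(1) X1a aY ab by auto
  hence gt: "mrank \<B> (insert b X1) > mrank \<B> X1" using flat unfolding flat_def by auto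
  have finS1: "finite {card I | I. I \<subseteq> X1 \<and> indep \<B> I}" using finite_cards fin1 by blast
  have "card Y \<in> {card I | I. I \<subseteq> X1 \<and> indep \<B> I}" using Y(1) indY by blast
  hence "card Y \<le> mrank \<B> X1" unfolding mrank_def using finS1 by (simp add: Max_ge)
  hence ge: "mrank \<B> (insert b X1) \<ge> r" using gt Y r by linarith
  have finS2: "finite {card I | I. I \<subseteq> insert b X1 \<and> indep \<B> I}" using finite_cards fin1 by blast
  have neS2: "{card I | I. I \<subseteq> insert b X1 \<and> indep \<B> I} \<noteq> {}" using Y(1) indY by blast
  have "mrank \<B> (insert b X1) \<in> {card I | I. I \<subseteq> insert b X1 \<and> indep \<B> I}"
    unfolding mrank_def using Max_in[OF finS2 neS2] .
  then obtain I where I: "I \<subseteq> insert b X1" "indep \<B> I" "card I = mrank \<B> (insert b X1)" by auto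
  have IB: "I \<in> \<B>" using indep_card[OF mb cr I(2)] I(3) ge by simp
  have bI: "b \<in> I"
  proof (rule ccontr)
    assume "b \<notin> I"
    hence "I \<subseteq> X1" using I(1) by auto
    moreover have "card X1 \<le> card I" using IB cr X1 by auto
    ultimately have "I = X1" using fin1 by (meson card_seteq)
    thus False using IB X1 by simp
  qed
  have cI: "c \<notin> I" using I(1) X1a cY ca cb by auto
  then obtain y where y: "y \<in> I - B0" "insert y (B0 - {c}) \<in> \<B>"
    using mb B0(1) IB B0c unfolding matroid_bases_def by (metis Diff_iff insertI1)
  have B0Y: "B0 - {c} = Y" using B0c cY by auto
  have "y = a \<or> y = b" using y(1) I(1) X1a B0(2) by auto
  thus False using y(2) B0Y X1a X2b X1(3) X2(3) by auto
qed

lemma key_bound: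
  fixes n r :: nat
  assumes rn: "r \<le> n" and r1: "r \<ge> 1"
  shows "real (s n r) ^ r \<le> (real n - real r + 2) ^ (n choose (r - 1))"
proof -
  define E where "E = {1..n}"
  define V where "V = {X. X \<subseteq> E \<and> card X = r}"
  define J where "J = {Y. Y \<subseteq> E \<and> card Y = r - 1}"
  define G where "G Y = {X\<in>V. Y \<subseteq> X}" for Y
  define Good where "Good = {\<B>. matroid_bases E \<B> \<and> (\<forall>B\<in>\<B>. card B = r) \<and> sparse_paving E r \<B>}"
  define F where "F = (\<lambda>\<B>. V - \<B>) ` Good"
  have finE: "finite E" and cE: "card E = n" unfolding E_def by auto
  have finV: "finite V" unfolding V_def using finE by (simp add: finite_subset)
  have finJ: "finite J" unfolding J_def using finE by (simp add: finite_subset)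
  have cJ: "card J = n choose (r - 1)" unfolding J_def using n_subsets[OF finE] cE by simp
  have sub: "\<B> \<subseteq> V" if "\<B> \<in> Good" for \<B>
    using that unfolding Good_def V_def matroid_bases_def by auto
  have inj: "inj_on (\<lambda>\<B>. V - \<B>) Good"
  proof (rule inj_onI)
    fix B1 B2 assume "B1 \<in> Good" "B2 \<in> Good" "V - B1 = V - B2"
    thus "B1 = B2" using sub[of B1] sub[of B2] by blast
  qed
  have sF: "s n r = card F" unfolding F_def card_image[OF inj] by (simp add: s_def Good_def E_def)
  have FP: "F \<subseteq> Pow V" unfolding F_def by auto
  have cov: "\<forall>X\<in>V. card {Y\<in>J. X \<in> G Y} = r"
  proof
    fix X assume X: "X \<in> V"
    have "{Y\<in>J. X \<in> G Y} = {Y. Y \<subseteq> X \<and> card Y = r - 1}"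
      using X unfolding J_def G_def V_def by auto
    moreover have "finite X" using X finE unfolding V_def by (auto intro: finite_subset)
    ultimately have "card {Y\<in>J. X \<in> G Y} = card X choose (r - 1)" using n_subsets by simp
    also have "\<dots> = r choose (r - 1)" using X unfolding V_def by simp
    also have "\<dots> = r" using r1 binomial_symmetric[of "r - 1" r] by simp
    finally show "card {Y\<in>J. X \<in> G Y} = r" .
  qed
  have tr: "real (card ((\<lambda>S. S \<inter> G Y) ` F)) \<le> real n - real r + 2" if Y: "Y \<in> J" for Y
  proof -
    have "(\<lambda>S. S \<inter> G Y) ` F \<subseteq> insert {} ((\<lambda>X. {X}) ` G Y)"
    proof
      fix T assume "T \<in> (\<lambda>S. S \<inter> G Y) ` F"
      then obtain \<B> where B: "\<B> \<in> Good" "T = (V - \<B>) \<inter> G Y" unfolding F_def by auto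
      show "T \<in> insert {} ((\<lambda>X. {X}) ` G Y)"
      proof (cases "T = {}")
        case True thus ?thesis by simp
      next
        case False
        then obtain X1 where X1: "X1 \<in> T" by auto
        have "T = {X1}"
        proof
          show "{X1} \<subseteq> T" using X1 by auto
          show "T \<subseteq> {X1}"
          proof
            fix X2 assume X2: "X2 \<in> T"
            have "X1 = X2"
              by (rule stable[of E \<B> r X1 X2 Y])
                (use B X1 X2 Y r1 in \<open>auto simp: Good_def V_def G_def J_def\<close>)
            thus "X2 \<in> {X1}" by simp
          qed
        qed
        moreover have "X1 \<in> G Y" using X1 B by auto
        ultimately show ?thesis by auto
      qed
    qed
    hence "card ((\<lambda>S. S \<inter> G Y) ` F) \<le> card (insert {} ((\<lambda>X. {X}) ` G Y))"
      by (intro card_mono) (auto simp: G_def finV)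
    also have "\<dots> \<le> Suc (card ((\<lambda>X. {X}) ` G Y))" by (simp add: card_insert_if G_def finV)
    also have "\<dots> \<le> Suc (card (G Y))" by (simp add: card_image_le G_def finV)
    also have "card (G Y) \<le> card (E - Y)"
    proof -
      have "G Y \<subseteq> (\<lambda>x. insert x Y) ` (E - Y)"
      proof
        fix X assume X: "X \<in> G Y"
        hence XV: "X \<subseteq> E" "card X = r" "Y \<subseteq> X" unfolding G_def V_def by auto
        have fX: "finite X" using XV finE by (auto intro: finite_subset)
        have "card (X - Y) = 1" using XV Y r1 fX unfolding J_def
          by (simp add: card_Diff_subset finite_subset)
        then obtain x where "X - Y = {x}" by (meson card_1_singletonE)
        hence "X = insert x Y" "x \<in> E - Y" using XV by auto
        thus "X \<in> (\<lambda>x. insert x Y) ` (E - Y)" by auto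
      qed
      thus ?thesis using finE by (meson card_image_le finite_Diff order_trans card_mono finite_imageI)
    qed
    also have "card (E - Y) = n - (r - 1)" using Y cE finE unfolding J_def by (metis (mono_tags, lifting) card_Diff_subset finite_subset mem_Collect_eq)
    finally have "card ((\<lambda>S. S \<inter> G Y) ` F) \<le> Suc (n - (r - 1))" by simp
    thus ?thesis using rn r1 by linarith
  qed
  have "real (card F) ^ r \<le> (\<Prod>Y\<in>J. real (card ((\<lambda>S. S \<inter> G Y) ` F)))"
    by (rule shearer[OF finV finJ r1 cov FP])
  also have "\<dots> \<le> (\<Prod>Y\<in>J. real n - real r + 2)"
    using tr by (intro prod_mono) auto
  also have "\<dots> = (real n - real r + 2) ^ (n choose (r - 1))" using cJ by simp
  finally show ?thesis using sF by simp
qed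

theorem theorem1p2:
  fixes n r :: nat
  assumes "r \<le> n"
  shows "log 2 (real (s n r))
           \<le> 1 / (real n - real r + 1) * real (n choose r) * log 2 (real n - real r + 2)"
proof -
  have L0: "log 2 (real n - real r + 2) \<ge> 0" using assms by simp
  have R0: "0 \<le> 1 / (real n - real r + 1) * real (n choose r) * log 2 (real n - real r + 2)"
    using assms L0 by (intro mult_nonneg_nonneg) auto
  show ?thesis
  proof (cases "s n r = 0")
    case True thus ?thesis using R0 by (simp add: log_def)
  next
    case s0: False
    show ?thesis
    proof (cases "r = 0")
      case True
      have "{\<B>. matroid_bases {1..n} \<B> \<and> (\<forall>B\<in>\<B>. card B = r) \<and> sparse_paving {1..n} r \<B>} \<subseteq> {{{}}}"
      proof
        fix \<B> assume "\<B> \<in> {\<B>. matroid_bases {1..n} \<B> \<and> (\<forall>B\<in>\<B>. card B = r) \<and> sparse_paving {1..n} r \<B>}"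
        hence h: "matroid_bases {1..n} \<B>" "\<forall>B\<in>\<B>. card B = 0" using True by auto
        have "\<forall>B\<in>\<B>. B = {}" using h unfolding matroid_bases_def
          by (metis PowD card_0_eq finite_atLeastAtMost finite_subset subsetD)
        moreover have "\<B> \<noteq> {}" using h unfolding matroid_bases_def by auto
        ultimately show "\<B> \<in> {{{}}}" by auto
      qed
      hence "s n r \<le> card {{{}}::nat set set}" unfolding s_def by (intro card_mono) auto
      hence "s n r \<le> 1" by simp
      hence "s n r = 1" using s0 by simp
      thus ?thesis using R0 by simp
    next
      case False
      then obtain q where q: "r = Suc q" by (cases r) auto
      define m where "m = n choose q"
      define L where "L = real n - real r + 2"
      have Lp: "L > 0" using assms L_def by simp
      have kb: "real (s n r) ^ r \<le> L ^ m" using key_bound[OF assms] q m_def L_def by simp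
      have sp: "real (s n r) > 0" using s0 by simp
      have rp: "real r > 0" using q by simp
      have "log 2 (real (s n r) ^ r) \<le> log 2 (L ^ m)"
        using kb sp Lp by (subst log_le_cancel_iff) auto
      hence "real r * log 2 (real (s n r)) \<le> real m * log 2 L"
        by (simp only: log_nat_power[OF less_imp_le[OF sp]] log_nat_power[OF less_imp_le[OF Lp]])
      hence "log 2 (real (s n r)) \<le> (real m * log 2 L) / real r"
        using rp by (simp add: pos_le_divide_eq mult.commute)
      hence le: "log 2 (real (s n r)) \<le> real m / real r * log 2 L" by simp
      have "Suc q * (n choose Suc q) = (n - q) * (n choose q)"
        using binomial_absorption[of q n] binomial_absorb_comp[of n q] by simp
      hence "real (Suc q * (n choose Suc q)) = real ((n - q) * (n choose q))" by (simp only:)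
      hence "real (Suc q) * real (n choose Suc q) = real (n - q) * real m"
        unfolding m_def of_nat_mult .
      moreover have "real (n - q) = real n - real r + 1" using q assms by (simp add: of_nat_diff)
      ultimately have "real r * real (n choose r) = (real n - real r + 1) * real m"
        using q by simp
      moreover have "real n - real r + 1 > 0" using assms by simp
      ultimately have "real m / real r = 1 / (real n - real r + 1) * real (n choose r)"
        using rp by (simp add: divide_simps mult.commute)
      thus ?thesis using le L_def by simp
    qed
  qed
qed


end
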